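(* Let $F$ be an infinite field (e.g. $\mathbb{R}$ or $\mathbb{C}$), let $V$ be a vector space over $F$, and let $n\ge 1$. A widget with $n$ pairs in $V$ is valid if and only if it is full and contains a legal subwidget.
   Context: A widget with $n$ pairs in $V$ is an indexed family of $n$ pairs of vectors $p_i=(p_i^+,p_i^-)$, $i=1,\dots,n$, in $V$ (the vectors $p_i^+,p_i^-$ are called the points of the pair $p_i$). A section of a widget is a set of points containing at most one point from each pair. A widget with $n$ pairs is legal if every section spans a linear subspace of $V$ of dimension at most $n-1$. A widget with $n$ pairs is full if the linear span of all its $2n$ points has dimension at least $n$. A widget is valid if it is both legal and full. A subwidget of a widget with $n$ pairs is the widget formed by some $k$ of its pairs with $1\le k<n$; it is itself a widget with $k$ pairs, so it is legal if every one of its sections spans a subspace of dimension at most $k-1$. *)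

theory Defs
  imports Complex_Main
begin

text \<open>We allow an arbitrary finite index set J of pairs; a widget with n pairs
  uses the index set {..<n}, and a subwidget is given by a subset J of the
  indices.\<close>

definition pt :: "('v \<times> 'v) \<Rightarrow> bool \<Rightarrow> 'v" where
  "pt q b = (if b then fst q else snd q)"

definition widget_sections :: "nat set \<Rightarrow> (nat \<Rightarrow> 'v \<times> 'v) \<Rightarrow> 'v set set" where
  "widget_sections J p = {(\<lambda>i. pt (p i) (s i)) ` I | I s. I \<subseteq> J}"

definition widget_legal ::
  "('a::field \<Rightarrow> 'v::ab_group_add \<Rightarrow> 'v) \<Rightarrow> nat set \<Rightarrow> (nat \<Rightarrow> 'v \<times> 'v) \<Rightarrow> bool" where
  "widget_legal scale J p \<longleftrightarrow>
     (\<forall>S \<in> widget_sections J p. vector_space.dim scale S \<le> card J - 1)"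

definition widget_full ::
  "('a::field \<Rightarrow> 'v::ab_group_add \<Rightarrow> 'v) \<Rightarrow> nat set \<Rightarrow> (nat \<Rightarrow> 'v \<times> 'v) \<Rightarrow> bool" where
  "widget_full scale J p \<longleftrightarrow>
     card J \<le> vector_space.dim scale (fst ` p ` J \<union> snd ` p ` J)"

definition widget_valid ::
  "('a::field \<Rightarrow> 'v::ab_group_add \<Rightarrow> 'v) \<Rightarrow> nat set \<Rightarrow> (nat \<Rightarrow> 'v \<times> 'v) \<Rightarrow> bool" where
  "widget_valid scale J p \<longleftrightarrow> widget_legal scale J p \<and> widget_full scale J p"

definition has_legal_subwidget ::
  "('a::field \<Rightarrow> 'v::ab_group_add \<Rightarrow> 'v) \<Rightarrow> nat set \<Rightarrow> (nat \<Rightarrow> 'v \<times> 'v) \<Rightarrow> bool" where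
  "has_legal_subwidget scale J p \<longleftrightarrow>
     (\<exists>K. K \<subseteq> J \<and> 1 \<le> card K \<and> card K < card J \<and> widget_legal scale K p)"

end

theory Submission
  imports Defs
begin

context vector_space
begin

lemma dim_submod:
  assumes "finite S" "finite T"
  shows "dim (S \<union> T) + dim (S \<inter> T) \<le> dim S + dim T"
proof -
  obtain C where C: "C \<subseteq> S \<inter> T" "independent C" "S \<inter> T \<subseteq> span C"
    by (rule maximal_independent_subset)
  obtain B1 where B1: "C \<subseteq> B1" "B1 \<subseteq> S" "independent B1" "S \<subseteq> span B1"
    using maximal_independent_subset_extend[of C S] C by blast
  obtain B2 where B2: "C \<subseteq> B2" "B2 \<subseteq> T" "independent B2" "T \<subseteq> span B2"
    using maximal_independent_subset_extend[of C T] C by blast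
  have fB1: "finite B1" using B1 assms finite_subset by blast
  have fB2: "finite B2" using B2 assms finite_subset by blast
  have d1: "dim S = card B1" using dim_unique B1 by blast
  have d2: "dim T = card B2" using dim_unique B2 by blast
  have d3: "dim (S \<inter> T) = card C" using dim_unique C by blast
  have "S \<union> T \<subseteq> span (B1 \<union> B2)"
    using B1 B2 span_mono[of B1 "B1 \<union> B2"] span_mono[of B2 "B1 \<union> B2"] by blast
  then have d4: "dim (S \<union> T) \<le> card (B1 \<union> B2)" using dim_le_card fB1 fB2 by blast
  have "card (B1 \<union> B2) + card (B1 \<inter> B2) = card B1 + card B2"
    using card_Un_Int[OF fB1 fB2] by linarith
  moreover have "card C \<le> card (B1 \<inter> B2)"
    using B1 B2 fB1 by (intro card_mono) auto
  ultimately show ?thesis using d1 d2 d3 d4 by linarith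
qed

lemma dimF_subset:
  assumes "S \<subseteq> T" "finite T"
  shows "dim S \<le> dim T"
proof -
  obtain B where B: "B \<subseteq> T" "independent B" "T \<subseteq> span B"
    by (rule maximal_independent_subset)
  have fB: "finite B" using B assms finite_subset by blast
  have "dim T = card B" using dim_unique B by blast
  moreover have "dim S \<le> card B" using B assms fB by (intro dim_le_card) auto
  ultimately show ?thesis by simp
qed

lemma dim_empty0: "dim {} = 0"
  by (rule dim_unique[of "{}"]) (auto simp: independent_empty)

lemma dim_subadd:
  assumes "finite S" "finite T"
  shows "dim (S \<union> T) \<le> dim S + dim T"
  using dim_submod[OF assms] by linarith

lemma rado_aux:
  "N = (\<Sum>i\<in>J. card (A i)) \<Longrightarrow> finite J \<Longrightarrow> (\<forall>i\<in>J. finite (A i)) \<Longrightarrow>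
   (\<forall>K\<subseteq>J. card K \<le> dim (\<Union>(A ` K))) \<Longrightarrow>
   \<exists>f. (\<forall>i\<in>J. f i \<in> A i) \<and> card J \<le> dim (f ` J)"
proof (induction N arbitrary: A rule: less_induct)
  case (less N A)
  note fin = less.prems(2,3) and cond = less.prems(4)
  have ne: "A i \<noteq> {}" if "i \<in> J" for i
  proof
    assume "A i = {}"
    then show False using cond[rule_format, of "{i}"] that by (simp add: dim_empty0)
  qed
  show ?case
  proof (cases "\<exists>i\<in>J. 2 \<le> card (A i)")
    case False
    define f where "f i = the_elem (A i)" for i
    have Ai: "A i = {f i}" if "i \<in> J" for i
    proof -
      have c0: "card (A i) \<noteq> 0" using ne[OF that] fin that by simp
      have c1: "card (A i) < 2" using False that by auto
      have "card (A i) = 1" using c0 c1 by linarith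
      then obtain a where "A i = {a}" by (rule card_1_singletonE)
      then show ?thesis unfolding f_def by simp
    qed
    have "\<Union>(A ` J) = f ` J" using Ai by auto
    then show ?thesis using cond Ai by (intro exI[of _ f]) auto
  next
    case True
    then obtain i where iJ: "i \<in> J" and c2: "2 \<le> card (A i)" by blast
    obtain x where x: "x \<in> A i" using ne iJ by blast
    have "card (A i - {x}) \<ge> 1" using c2 x fin iJ by simp
    then obtain y where y: "y \<in> A i" "y \<noteq> x"
      by (metis Diff_iff card.empty not_one_le_zero insertCI subsetI subset_empty)
    define A1 where "A1 = A(i := A i - {x})"
    define A2 where "A2 = A(i := A i - {y})"
    have sumless: "(\<Sum>j\<in>J. card (B j)) < N"
      if "B = A(i := A i - {z})" "z \<in> A i" for B z
    proof -
      have "(\<Sum>j\<in>J. card (B j)) = card (B i) + (\<Sum>j\<in>J-{i}. card (B j))"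
        using sum.remove[OF fin(1) iJ] by blast
      also have "(\<Sum>j\<in>J-{i}. card (B j)) = (\<Sum>j\<in>J-{i}. card (A j))"
        using that by (intro sum.cong) auto
      also have "card (B i) < card (A i)" using that fin iJ card_Diff1_less[of "A i" z]
        by simp
      then have "card (B i) + (\<Sum>j\<in>J-{i}. card (A j)) < card (A i) + (\<Sum>j\<in>J-{i}. card (A j))"
        by simp
      also have "\<dots> = N" using less.prems(1) sum.remove[OF fin(1) iJ, of "\<lambda>j. card (A j)"] by simp
      finally show ?thesis by simp
    qed
    have finB: "\<forall>j\<in>J. finite (B j)" if "B = A(i := A i - {z})" for B z
      using that fin by auto
    show ?thesis
    proof (cases "\<forall>K\<subseteq>J. card K \<le> dim (\<Union>(A1 ` K))")
      case True
      from less.IH[OF sumless[OF A1_def x] refl fin(1) finB[OF A1_def] True]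
      obtain f where "\<forall>j\<in>J. f j \<in> A1 j" "card J \<le> dim (f ` J)" by blast
      then show ?thesis unfolding A1_def by (intro exI[of _ f]) (auto split: if_splits)
    next
      case F1: False
      show ?thesis
      proof (cases "\<forall>K\<subseteq>J. card K \<le> dim (\<Union>(A2 ` K))")
        case True
        from less.IH[OF sumless[OF A2_def y(1)] refl fin(1) finB[OF A2_def] True]
        obtain f where "\<forall>j\<in>J. f j \<in> A2 j" "card J \<le> dim (f ` J)" by blast
        then show ?thesis unfolding A2_def by (intro exI[of _ f]) (auto split: if_splits)
      next
        case F2: False
        obtain K1 where K1: "K1 \<subseteq> J" "dim (\<Union>(A1 ` K1)) < card K1" using F1 by auto
        obtain K2 where K2: "K2 \<subseteq> J" "dim (\<Union>(A2 ` K2)) < card K2" using F2 by auto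
        have iK1: "i \<in> K1"
        proof (rule ccontr)
          assume "i \<notin> K1"
          then have e: "\<Union>(A1 ` K1) = \<Union>(A ` K1)" unfolding A1_def by auto
          have "card K1 \<le> dim (\<Union>(A ` K1))" using cond K1(1) by blast
          then show False using K1(2) unfolding e by linarith
        qed
        have iK2: "i \<in> K2"
        proof (rule ccontr)
          assume "i \<notin> K2"
          then have e: "\<Union>(A2 ` K2) = \<Union>(A ` K2)" unfolding A2_def by auto
          have "card K2 \<le> dim (\<Union>(A ` K2))" using cond K2(1) by blast
          then show False using K2(2) unfolding e by linarith
        qed
        define S1 where "S1 = \<Union>(A1 ` K1)"
        define S2 where "S2 = \<Union>(A2 ` K2)"
        have fK1: "finite K1" and fK2: "finite K2" using K1 K2 fin finite_subset by blast+
        have fS1: "finite S1" unfolding S1_def using fK1 finB[OF A1_def] K1 by auto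
        have fS2: "finite S2" unfolding S2_def using fK2 finB[OF A2_def] K2 by auto
        have u: "\<Union>(A ` (K1 \<union> K2)) \<subseteq> S1 \<union> S2"
        proof
          fix z assume "z \<in> \<Union>(A ` (K1 \<union> K2))"
          then obtain j where j: "j \<in> K1 \<union> K2" "z \<in> A j" by blast
          show "z \<in> S1 \<union> S2"
          proof (cases "j = i")
            case True
            then show ?thesis using j iK1 iK2 y unfolding S1_def S2_def A1_def A2_def
              by (cases "z = x") auto
          next
            case False
            then show ?thesis using j unfolding S1_def S2_def A1_def A2_def by auto
          qed
        qed
        have it: "\<Union>(A ` (K1 \<inter> K2 - {i})) \<subseteq> S1 \<inter> S2"
          unfolding S1_def S2_def A1_def A2_def by auto
        have e1: "card (K1 \<union> K2) \<le> dim (S1 \<union> S2)"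
          using cond[rule_format, of "K1 \<union> K2"] K1 K2 dimF_subset[OF u] fS1 fS2 by auto
        have e2: "card (K1 \<inter> K2 - {i}) \<le> dim (S1 \<inter> S2)"
        proof -
          have "K1 \<inter> K2 - {i} \<subseteq> J" using K1(1) by blast
          then have "card (K1 \<inter> K2 - {i}) \<le> dim (\<Union>(A ` (K1 \<inter> K2 - {i})))" using cond by blast
          moreover have "dim (\<Union>(A ` (K1 \<inter> K2 - {i}))) \<le> dim (S1 \<inter> S2)"
            using dimF_subset[OF it] fS1 by blast
          ultimately show ?thesis by linarith
        qed
        have e3: "card (K1 \<inter> K2 - {i}) + 1 = card (K1 \<inter> K2)"
        proof -
          have "0 < card (K1 \<inter> K2)" using iK1 iK2 fK1 by (auto simp: card_gt_0_iff)
          moreover have "card (K1 \<inter> K2 - {i}) = card (K1 \<inter> K2) - 1"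
            using iK1 iK2 fK1 by (simp add: card_Diff_singleton)
          ultimately show ?thesis by linarith
        qed
        have e4: "card (K1 \<union> K2) + card (K1 \<inter> K2) = card K1 + card K2"
          using card_Un_Int[OF fK1 fK2] by linarith
        have e5: "dim (S1 \<union> S2) + dim (S1 \<inter> S2) \<le> dim S1 + dim S2"
          using dim_submod[OF fS1 fS2] .
        show ?thesis using e1 e2 e3 e4 e5 K1(2) K2(2) unfolding S1_def S2_def by linarith
      qed
    qed
  qed
qed

lemma main:
  assumes "n \<ge> 1"
  shows "widget_valid scale {..<n} p \<longleftrightarrow>
           widget_full scale {..<n} p \<and> has_legal_subwidget scale {..<n} p"
proof
  let ?J = "{..<n::nat}"
  let ?A = "\<lambda>i. {fst (p i), snd (p i)}"
  have ptA: "pt (p i) b \<in> ?A i" for i b by (auto simp: pt_def)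
  assume v: "widget_valid scale ?J p"
  then have legal: "widget_legal scale ?J p" and full: "widget_full scale ?J p"
    by (auto simp: widget_valid_def)
  have "\<not> (\<forall>K\<subseteq>?J. card K \<le> dim (\<Union>(?A ` K)))"
  proof
    assume c: "\<forall>K\<subseteq>?J. card K \<le> dim (\<Union>(?A ` K))"
    obtain f where f: "\<forall>i\<in>?J. f i \<in> ?A i" "card ?J \<le> dim (f ` ?J)"
      using rado_aux[OF refl _ _ c] by auto
    define s where "s i = (f i = fst (p i))" for i
    have "f ` ?J = (\<lambda>i. pt (p i) (s i)) ` ?J"
      using f(1) by (intro image_cong) (auto simp: pt_def s_def)
    then have "f ` ?J \<in> widget_sections ?J p" unfolding widget_sections_def by blast
    then have "dim (f ` ?J) \<le> card ?J - 1" using legal unfolding widget_legal_def by blast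
    then show False using f(2) assms by simp
  qed
  then obtain K where K: "K \<subseteq> ?J" "dim (\<Union>(?A ` K)) < card K" by auto
  have fK: "finite K" using K finite_subset by blast
  have "K \<noteq> ?J"
  proof
    assume "K = ?J"
    moreover have "\<Union>(?A ` ?J) = fst ` p ` ?J \<union> snd ` p ` ?J" by auto
    ultimately show False using full K unfolding widget_full_def by simp
  qed
  then have lt: "card K < card ?J" using K by (intro psubset_card_mono) auto
  have ge: "1 \<le> card K" using K by (cases "card K") (auto simp: dim_empty0)
  have "widget_legal scale K p" unfolding widget_legal_def
  proof
    fix S assume "S \<in> widget_sections K p"
    then obtain I s where "S = (\<lambda>i. pt (p i) (s i)) ` I" "I \<subseteq> K"
      unfolding widget_sections_def by blast
    then have "S \<subseteq> \<Union>(?A ` K)" using ptA by blast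
    moreover have "finite (\<Union>(?A ` K))" using fK by auto
    ultimately have "dim S \<le> dim (\<Union>(?A ` K))" by (rule dimF_subset)
    then show "dim S \<le> card K - 1" using K(2) by linarith
  qed
  then show "widget_full scale ?J p \<and> has_legal_subwidget scale ?J p"
    using full K(1) lt ge unfolding has_legal_subwidget_def by blast
next
  let ?J = "{..<n::nat}"
  assume a: "widget_full scale ?J p \<and> has_legal_subwidget scale ?J p"
  then obtain K where K: "K \<subseteq> ?J" "1 \<le> card K" "card K < card ?J" "widget_legal scale K p"
    unfolding has_legal_subwidget_def by blast
  have "widget_legal scale ?J p" unfolding widget_legal_def
  proof
    fix S assume "S \<in> widget_sections ?J p"
    then obtain I s where S: "S = (\<lambda>i. pt (p i) (s i)) ` I" "I \<subseteq> ?J"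
      unfolding widget_sections_def by blast
    let ?g = "\<lambda>i. pt (p i) (s i)"
    have fI: "finite I" using S finite_subset by blast
    have Sd: "S = ?g ` (I \<inter> K) \<union> ?g ` (I - K)" using S by auto
    have "?g ` (I \<inter> K) \<in> widget_sections K p" unfolding widget_sections_def by blast
    then have d1: "dim (?g ` (I \<inter> K)) \<le> card K - 1" using K(4) unfolding widget_legal_def by blast
    have "dim (?g ` (I - K)) \<le> card (?g ` (I - K))"
      using fI by (intro dim_le_card) (auto intro: span_base)
    also have "\<dots> \<le> card (I - K)" using fI card_image_le by blast
    also have "\<dots> \<le> card (?J - K)" using S by (intro card_mono) auto
    also have "\<dots> = card ?J - card K" using K by (simp add: card_Diff_subset finite_subset)
    finally have d2: "dim (?g ` (I - K)) \<le> card ?J - card K" .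
    have "dim S \<le> dim (?g ` (I \<inter> K)) + dim (?g ` (I - K))"
      unfolding Sd using fI by (intro dim_subadd) auto
    then show "dim S \<le> card ?J - 1" using d1 d2 K(2,3) by linarith
  qed
  then show "widget_valid scale ?J p" using a by (simp add: widget_valid_def)
qed

end

theorem corollary1p1:
  fixes scale :: "'a::field \<Rightarrow> 'v::ab_group_add \<Rightarrow> 'v"
    and n :: nat and p :: "nat \<Rightarrow> 'v \<times> 'v"
  assumes "vector_space scale"
    and "infinite (UNIV :: 'a set)"
    and "n \<ge> 1"
  shows "widget_valid scale {..<n} p \<longleftrightarrow>
           widget_full scale {..<n} p \<and> has_legal_subwidget scale {..<n} p"
  by (rule vector_space.main[OF assms(1) assms(3)])

end
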